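(* Let $\{\mathcal H,\gamma,\ell,\ell^{(2)}\}$ be null metric hypersurface data, $\theta$ any one-form and $f$ any smooth function on $\mathcal H$. Let $X$ be the vector field $X^b=P^{bc}\theta_c$. Then $$n^b(\mathcal L_X\gamma)_{ab}=(\mathcal L_n\theta)_a-\mathcal L_n\big(\theta(n)\big)\ell_a-2\big(\theta(n)s_a+P^{bc}U_{ab}\theta_c\big),\qquad n^b(\mathcal L_{fn}\gamma)_{ab}=0.$$
   Context: Metric hypersurface data: $\mathcal H$ smooth $\mathfrak n$-manifold with symmetric $(0,2)$-tensor $\gamma$, one-form $\ell$, function $\ell^{(2)}$ such that $\mathcal A((W,a),(V,b))=\gamma(W,V)+a\ell(V)+b\ell(W)+ab\ell^{(2)}$ is non-degenerate on each $T_p\mathcal H\times\mathbb R$. $P$ (symmetric $(2,0)$), $n$, $n^{(2)}$ defined by $\gamma_{ab}n^b+n^{(2)}\ell_a=0$, $\ell_an^a+n^{(2)}\ell^{(2)}=1$, $P^{ab}\ell_b+\ell^{(2)}n^a=0$, $P^{ac}\gamma_{cb}+\ell_bn^a=\delta^a_b$; null means $n^{(2)}=0$. $U_{ab}=\frac12(\mathcal L_n\gamma)_{ab}$ (null case), $F=\frac12d\ell$, $s_a=n^bF_{ba}$, $\theta(n)=\theta_an^a$. *)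

theory Defs
  imports "HOL-Analysis.Analysis"
begin

text \<open>The hypersurface is modelled by an open coordinate
domain H in real^'n (the dimension is CARD('n)). Tensor fields are given by their
component functions: a function is real^'n => real, a vector field or one-form is
real^'n => 'n => real, a (0,2) or (2,0) tensor is real^'n => 'n => 'n => real.\<close>

definition pd :: "'n::finite \<Rightarrow> (real^'n \<Rightarrow> real) \<Rightarrow> real^'n \<Rightarrow> real" where
  "pd i f x = frechet_derivative f (at x) (axis i 1)"

fun Ck :: "nat \<Rightarrow> (real^'n::finite) set \<Rightarrow> (real^'n \<Rightarrow> real) \<Rightarrow> bool" where
  "Ck 0 S f = continuous_on S f"
| "Ck (Suc k) S f = ((\<forall>x\<in>S. f differentiable (at x)) \<and> (\<forall>i. Ck k S (pd i f)))"

definition smooth_fun :: "(real^'n::finite) set \<Rightarrow> (real^'n \<Rightarrow> real) \<Rightarrow> bool" where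
  "smooth_fun S f \<longleftrightarrow> (\<forall>k. Ck k S f)"

definition smooth_field1 :: "(real^'n::finite) set \<Rightarrow> (real^'n \<Rightarrow> 'n \<Rightarrow> real) \<Rightarrow> bool" where
  "smooth_field1 S V \<longleftrightarrow> (\<forall>a. smooth_fun S (\<lambda>x. V x a))"

definition smooth_field2 :: "(real^'n::finite) set \<Rightarrow> (real^'n \<Rightarrow> 'n \<Rightarrow> 'n \<Rightarrow> real) \<Rightarrow> bool" where
  "smooth_field2 S T \<longleftrightarrow> (\<forall>a b. smooth_fun S (\<lambda>x. T x a b))"

definition lie_fun :: "(real^'n::finite \<Rightarrow> 'n \<Rightarrow> real) \<Rightarrow> (real^'n \<Rightarrow> real) \<Rightarrow> real^'n \<Rightarrow> real" where
  "lie_fun V f x = (\<Sum>c\<in>UNIV. V x c * pd c f x)"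

definition lie_form :: "(real^'n::finite \<Rightarrow> 'n \<Rightarrow> real) \<Rightarrow> (real^'n \<Rightarrow> 'n \<Rightarrow> real) \<Rightarrow> real^'n \<Rightarrow> 'n \<Rightarrow> real" where
  "lie_form V \<theta> x a = (\<Sum>c\<in>UNIV. V x c * pd c (\<lambda>y. \<theta> y a) x + \<theta> x c * pd a (\<lambda>y. V y c) x)"

definition lie_tensor :: "(real^'n::finite \<Rightarrow> 'n \<Rightarrow> real) \<Rightarrow> (real^'n \<Rightarrow> 'n \<Rightarrow> 'n \<Rightarrow> real)
    \<Rightarrow> real^'n \<Rightarrow> 'n \<Rightarrow> 'n \<Rightarrow> real" where
  "lie_tensor V T x a b = (\<Sum>c\<in>UNIV. V x c * pd c (\<lambda>y. T y a b) x
       + T x c b * pd a (\<lambda>y. V y c) x + T x a c * pd b (\<lambda>y. V y c) x)"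

text \<open>Metric hypersurface data: gamma symmetric, A non-degenerate at each point.\<close>

definition metric_hypersurface_data ::
  "(real^'n::finite) set \<Rightarrow> (real^'n \<Rightarrow> 'n \<Rightarrow> 'n \<Rightarrow> real) \<Rightarrow> (real^'n \<Rightarrow> 'n \<Rightarrow> real) \<Rightarrow> (real^'n \<Rightarrow> real) \<Rightarrow> bool" where
  "metric_hypersurface_data H \<gamma> ell ell2 \<longleftrightarrow>
     open H \<and> smooth_field2 H \<gamma> \<and> smooth_field1 H ell \<and> smooth_fun H ell2 \<and>
     (\<forall>x\<in>H. \<forall>a b. \<gamma> x a b = \<gamma> x b a) \<and>
     (\<forall>x\<in>H. \<forall>(W::'n \<Rightarrow> real) (s::real).
        (\<forall>(V::'n \<Rightarrow> real) (t::real).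
           (\<Sum>a\<in>UNIV. \<Sum>b\<in>UNIV. \<gamma> x a b * W a * V b) + s * (\<Sum>a\<in>UNIV. ell x a * V a)
           + t * (\<Sum>a\<in>UNIV. ell x a * W a) + s * t * ell2 x = 0)
        \<longrightarrow> (W = (\<lambda>_. 0) \<and> s = 0))"

text \<open>The fields P, n, n2 determined by the data (uniquely, by non-degeneracy).\<close>

definition hypersurface_inverse ::
  "(real^'n::finite) set \<Rightarrow> (real^'n \<Rightarrow> 'n \<Rightarrow> 'n \<Rightarrow> real) \<Rightarrow> (real^'n \<Rightarrow> 'n \<Rightarrow> real) \<Rightarrow> (real^'n \<Rightarrow> real)
   \<Rightarrow> (real^'n \<Rightarrow> 'n \<Rightarrow> 'n \<Rightarrow> real) \<Rightarrow> (real^'n \<Rightarrow> 'n \<Rightarrow> real) \<Rightarrow> (real^'n \<Rightarrow> real) \<Rightarrow> bool" where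
  "hypersurface_inverse H \<gamma> ell ell2 P n n2 \<longleftrightarrow>
     (\<forall>x\<in>H.
       (\<forall>a b. P x a b = P x b a) \<and>
       (\<forall>a. (\<Sum>b\<in>UNIV. \<gamma> x a b * n x b) + n2 x * ell x a = 0) \<and>
       (\<Sum>a\<in>UNIV. ell x a * n x a) + n2 x * ell2 x = 1 \<and>
       (\<forall>a. (\<Sum>b\<in>UNIV. P x a b * ell x b) + ell2 x * n x a = 0) \<and>
       (\<forall>a b. (\<Sum>c\<in>UNIV. P x a c * \<gamma> x c b) + ell x b * n x a = (if a = b then 1 else 0)))"

definition U_tensor where
  "U_tensor n \<gamma> x a b = (1/2) * lie_tensor n \<gamma> x a b"

definition F_tensor :: "(real^'n::finite \<Rightarrow> 'n \<Rightarrow> real) \<Rightarrow> real^'n \<Rightarrow> 'n \<Rightarrow> 'n \<Rightarrow> real" where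
  "F_tensor ell x a b = (1/2) * (pd a (\<lambda>y. ell y b) x - pd b (\<lambda>y. ell y a) x)"

definition s_form :: "(real^'n::finite \<Rightarrow> 'n \<Rightarrow> real) \<Rightarrow> (real^'n \<Rightarrow> 'n \<Rightarrow> real) \<Rightarrow> real^'n \<Rightarrow> 'n \<Rightarrow> real" where
  "s_form n ell x a = (\<Sum>b\<in>UNIV. n x b * F_tensor ell x b a)"

end

theory Submission
  imports Defs
begin

lemma pd_has: "(f has_derivative f') (at x) \<Longrightarrow> pd i f x = f' (axis i 1)"
  unfolding pd_def by (drule frechet_derivative_at) simp

lemma pd_mult:
  assumes "f differentiable (at x)" "g differentiable (at x)"
  shows "pd i (\<lambda>y. f y * g y) x = f x * pd i g x + pd i f x * g x"
proof -
  have "((\<lambda>y. f y * g y) has_derivative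
     (\<lambda>h. f x * frechet_derivative g (at x) h + frechet_derivative f (at x) h * g x)) (at x)"
    using assms by (intro has_derivative_mult) (auto simp: frechet_derivative_works)
  from pd_has[OF this, of i] show ?thesis by (simp add: pd_def)
qed

lemma pd_add:
  assumes "f differentiable (at x)" "g differentiable (at x)"
  shows "pd i (\<lambda>y. f y + g y) x = pd i f x + pd i g x"
proof -
  have "((\<lambda>y. f y + g y) has_derivative
     (\<lambda>h. frechet_derivative f (at x) h + frechet_derivative g (at x) h)) (at x)"
    using assms by (intro has_derivative_add) (auto simp: frechet_derivative_works)
  from pd_has[OF this, of i] show ?thesis by (simp add: pd_def)
qed

lemma pd_sum:
  assumes "\<And>k. f k differentiable (at x)"
  shows "pd i (\<lambda>y. \<Sum>k\<in>(UNIV::'a::finite set). f k y) x = (\<Sum>k\<in>UNIV. pd i (f k) x)"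
proof -
  have "((\<lambda>y. \<Sum>k\<in>(UNIV::'a set). f k y) has_derivative
     (\<lambda>h. \<Sum>k\<in>UNIV. frechet_derivative (f k) (at x) h)) (at x)"
    using assms by (intro has_derivative_sum) (auto simp: frechet_derivative_works)
  from pd_has[OF this, of i] show ?thesis by (simp add: pd_def)
qed

lemma pd_const_open:
  assumes "open S" "x \<in> S" "\<And>y. y \<in> S \<Longrightarrow> f y = c"
  shows "pd i f x = 0"
proof -
  have "((\<lambda>y. c) has_derivative (\<lambda>h. 0)) (at x)" by simp
  then have "(f has_derivative (\<lambda>h. 0)) (at x)"
    by (rule has_derivative_transform_within_open[OF _ assms(1,2)]) (simp add: assms(3))
  then show ?thesis using pd_has by fastforce
qed

lemma pd_cong_open:
  assumes "open S" "x \<in> S" "\<And>y. y \<in> S \<Longrightarrow> f y = g y" "g differentiable (at x)"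
  shows "pd i f x = pd i g x"
proof -
  have "(g has_derivative frechet_derivative g (at x)) (at x)" using assms(4) frechet_derivative_works by blast
  then have "(f has_derivative frechet_derivative g (at x)) (at x)"
    by (rule has_derivative_transform_within_open[OF _ assms(1,2)]) (simp add: assms(3))
  from pd_has[OF this, of i] show ?thesis by (simp add: pd_def)
qed

lemma smooth_diff: "smooth_fun S f \<Longrightarrow> x \<in> S \<Longrightarrow> f differentiable (at x)"
proof -
  assume "smooth_fun S f" "x \<in> S"
  then have "Ck (Suc 0) S f" unfolding smooth_fun_def by blast
  with \<open>x \<in> S\<close> show ?thesis by simp
qed

lemma lin5: fixes u :: "'n::finite \<Rightarrow> real"
  shows "(\<Sum>b\<in>UNIV. u b * (X b - k * Y b - Z b - k * W b - V b * t))
    = (\<Sum>b\<in>UNIV. u b * X b) - k * (\<Sum>b\<in>UNIV. u b * Y b) - (\<Sum>b\<in>UNIV. u b * Z b) - k * (\<Sum>b\<in>UNIV. u b * W b) - t * (\<Sum>b\<in>UNIV. u b * V b)"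
  by (simp add: sum_subtractf right_diff_distrib sum_distrib_left mult_ac)

lemma delta_sum: fixes p :: "'n::finite \<Rightarrow> real" shows "(\<Sum>d\<in>UNIV. p d * (if d = a then 1 else 0)) = p a"
proof -
  have "(\<Sum>d\<in>UNIV. p d * (if d = a then 1 else 0)) = (\<Sum>d\<in>UNIV. if d = a then p d else 0)"
    by (intro sum.cong refl) simp
  also have "\<dots> = p a" by simp
  finally show ?thesis .
qed

lemma lin_inner: fixes p :: "'n::finite \<Rightarrow> real"
  shows "(\<Sum>d\<in>UNIV. p d * ((if d = a then 1 else 0) - k * q d) + r d * (- s d - k * w d - m * q d))
   = p a - k * (\<Sum>d\<in>UNIV. p d * q d) - (\<Sum>d\<in>UNIV. r d * s d) - k * (\<Sum>d\<in>UNIV. r d * w d) - m * (\<Sum>d\<in>UNIV. r d * q d)"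
proof -
  have "(\<Sum>d\<in>UNIV. p d * ((if d = a then 1 else 0) - k * q d) + r d * (- s d - k * w d - m * q d))
     = (\<Sum>d\<in>UNIV. p d * (if d = a then 1 else 0)) - k * (\<Sum>d\<in>UNIV. p d * q d) - (\<Sum>d\<in>UNIV. r d * s d) - k * (\<Sum>d\<in>UNIV. r d * w d) - m * (\<Sum>d\<in>UNIV. r d * q d)"
    by (simp add: sum_subtractf right_diff_distrib sum.distrib sum_distrib_left sum_negf algebra_simps)
  also have "(\<Sum>d\<in>UNIV. p d * (if d = a then 1 else 0)) = p a"
    by (rule delta_sum)
  finally show ?thesis .
qed

lemma r2gen: fixes u :: "'n::finite \<Rightarrow> real"
  shows "(\<Sum>c\<in>UNIV. u c * (\<Sum>e\<in>(UNIV::'m::finite set). A c e + B c e)) * k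
    = k * (\<Sum>c\<in>UNIV. u c * (\<Sum>e\<in>UNIV. A c e)) + k * (\<Sum>c\<in>UNIV. u c * (\<Sum>e\<in>UNIV. B c e))"
  by (simp add: sum.distrib distrib_left algebra_simps)

lemma r3gen: fixes u :: "'n::finite \<Rightarrow> real" assumes h: "2 * h = 1"
  shows "2 * (t * (\<Sum>b\<in>UNIV. u b * (h * (x b - y b)))) = t * (\<Sum>b\<in>UNIV. u b * x b) - t * (\<Sum>b\<in>UNIV. u b * y b)"
proof -
  have "(\<Sum>b\<in>UNIV. u b * (h*(x b - y b))) = (\<Sum>b\<in>UNIV. h * (u b * x b) - h * (u b * y b))"
    by (intro sum.cong refl) (simp add: algebra_simps)
  also have "\<dots> = h * (\<Sum>b\<in>UNIV. u b * x b) - h * (\<Sum>b\<in>UNIV. u b * y b)"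
    by (simp only: sum_distrib_left[symmetric] sum_subtractf)
  finally have eq: "(\<Sum>b\<in>UNIV. u b * (h*(x b - y b))) = h * (\<Sum>b\<in>UNIV. u b * x b) - h * (\<Sum>b\<in>UNIV. u b * y b)" .
  have "2 * (t * (h * X - h * Y)) = (2*h) * (t * X) - (2*h) * (t * Y)" for X Y :: real
    by (simp add: algebra_simps)
  then show ?thesis unfolding eq using h by simp
qed

lemma r4gen: fixes P :: "'n::finite \<Rightarrow> 'm::finite \<Rightarrow> real" assumes h: "2 * h = 1"
  shows "2 * (\<Sum>b\<in>UNIV. \<Sum>c\<in>UNIV. P b c * (h * (\<Sum>e\<in>(UNIV::'k::finite set). A b e + B b e + C b e)) * t c)
    = (\<Sum>b\<in>UNIV. \<Sum>c\<in>UNIV. P b c * t c * (\<Sum>e\<in>UNIV. A b e))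
    + (\<Sum>b\<in>UNIV. \<Sum>c\<in>UNIV. P b c * t c * (\<Sum>e\<in>UNIV. B b e))
    + (\<Sum>b\<in>UNIV. \<Sum>c\<in>UNIV. P b c * t c * (\<Sum>e\<in>UNIV. C b e))"
proof -
  have "(\<Sum>b\<in>UNIV. \<Sum>c\<in>UNIV. P b c * (h * (\<Sum>e\<in>(UNIV::'k::finite set). A b e + B b e + C b e)) * t c)
    = (\<Sum>b\<in>UNIV. \<Sum>c\<in>UNIV. h * (P b c * t c * (\<Sum>e\<in>UNIV. A b e) + P b c * t c * (\<Sum>e\<in>UNIV. B b e) + P b c * t c * (\<Sum>e\<in>UNIV. C b e)))"
    by (intro sum.cong refl) (simp add: sum.distrib algebra_simps)
  also have "\<dots> = h * ((\<Sum>b\<in>UNIV. \<Sum>c\<in>UNIV. P b c * t c * (\<Sum>e\<in>UNIV. A b e))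
    + (\<Sum>b\<in>UNIV. \<Sum>c\<in>UNIV. P b c * t c * (\<Sum>e\<in>UNIV. B b e))
    + (\<Sum>b\<in>UNIV. \<Sum>c\<in>UNIV. P b c * t c * (\<Sum>e\<in>UNIV. C b e)))"
    by (simp only: sum_distrib_left[symmetric] sum.distrib)
  finally show ?thesis using h by (simp add: mult.assoc[symmetric])
qed


lemma delta_gen: fixes D :: "'n::finite \<Rightarrow> real"
  shows "(\<Sum>c\<in>UNIV. t c * (\<Sum>e\<in>UNIV. D e * ((if c = e then 1 else 0) - l e * n c)))
     = (\<Sum>c\<in>UNIV. t c * D c) + (\<Sum>c\<in>UNIV. t c * n c) * - (\<Sum>e\<in>UNIV. D e * l e)"
proof -
  have inner: "(\<Sum>e\<in>UNIV. D e * ((if c = e then 1 else 0) - l e * n c)) = D c - n c * (\<Sum>e\<in>UNIV. D e * l e)" for c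
  proof -
    have "(\<Sum>e\<in>UNIV. D e * ((if c = e then 1 else 0) - l e * n c)) = (\<Sum>e\<in>UNIV. (if c = e then D e else 0) - n c * (D e * l e))"
      by (intro sum.cong refl) (simp add: algebra_simps)
    also have "\<dots> = D c - n c * (\<Sum>e\<in>UNIV. D e * l e)"
      by (simp add: sum_subtractf sum_distrib_left)
    finally show ?thesis .
  qed
  have "(\<Sum>c\<in>UNIV. t c * (\<Sum>e\<in>UNIV. D e * ((if c = e then 1 else 0) - l e * n c)))
     = (\<Sum>c\<in>UNIV. t c * D c - (t c * n c) * (\<Sum>e\<in>UNIV. D e * l e))"
    unfolding inner by (intro sum.cong refl) (simp add: algebra_simps)
  also have "\<dots> = (\<Sum>c\<in>UNIV. t c * D c) + (\<Sum>c\<in>UNIV. t c * n c) * - (\<Sum>e\<in>UNIV. D e * l e)"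
    by (simp add: sum_subtractf sum_distrib_right)
  finally show ?thesis .
qed

lemma swap_help: fixes u :: "'n::finite \<Rightarrow> real" shows "(\<Sum>b\<in>(UNIV::'n::finite set). u b * (\<Sum>c\<in>(UNIV::'m::finite set). v c * w c b)) = (\<Sum>c\<in>UNIV. v c * (\<Sum>b\<in>UNIV. w c b * u b))"
proof -
  have "(\<Sum>b\<in>(UNIV::'n::finite set). u b * (\<Sum>c\<in>(UNIV::'m::finite set). v c * w c b)) = (\<Sum>b\<in>UNIV. \<Sum>c\<in>UNIV. v c * (w c b * u b))"
    by (simp add: sum_distrib_left mult_ac)
  also have "\<dots> = (\<Sum>c\<in>UNIV. \<Sum>b\<in>UNIV. v c * (w c b * u b))" by (rule sum.swap)
  finally show ?thesis by (simp add: sum_distrib_left)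
qed

lemma swap_help2: fixes u :: "'n::finite \<Rightarrow> real" shows "(\<Sum>b\<in>(UNIV::'n::finite set). u b * (\<Sum>c\<in>(UNIV::'m::finite set). w c b * v c)) = (\<Sum>c\<in>UNIV. v c * (\<Sum>b\<in>UNIV. w c b * u b))"
  using swap_help[of u v w] by (simp add: mult.commute)

lemma split3: fixes u :: "'n::finite \<Rightarrow> real" shows "(\<Sum>b\<in>(UNIV::'n::finite set). u b * (\<Sum>c\<in>(UNIV::'m::finite set). A b c + B b c + C b c))
  = (\<Sum>b\<in>UNIV. u b * (\<Sum>c\<in>UNIV. A b c)) + (\<Sum>b\<in>UNIV. u b * (\<Sum>c\<in>UNIV. B b c)) + (\<Sum>b\<in>UNIV. u b * (\<Sum>c\<in>UNIV. C b c))"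
  by (simp only: sum.distrib distrib_left)

lemma tri: fixes p :: "'n::finite \<Rightarrow> 'm::finite \<Rightarrow> real"
  shows "(\<Sum>c\<in>UNIV. (\<Sum>d\<in>UNIV. p c d) * - (\<Sum>b\<in>(UNIV::'k::finite set). q c b)) = - (\<Sum>c\<in>UNIV. \<Sum>b\<in>UNIV. \<Sum>d\<in>UNIV. p c d * q c b)"
  by (simp add: sum_distrib_left sum_distrib_right sum_negf)

lemma alg1:
  fixes g P :: "'n::finite \<Rightarrow> 'n \<Rightarrow> real" and Dg DP :: "'n \<Rightarrow> 'n \<Rightarrow> 'n \<Rightarrow> real"
    and l nn th :: "'n \<Rightarrow> real" and Dl Dn Dth :: "'n \<Rightarrow> 'n \<Rightarrow> real" and a :: 'n
  assumes gsym: "\<And>i j. g i j = g j i" and Psym: "\<And>i j. P i j = P j i"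
    and Dgsym: "\<And>c i j. Dg c i j = Dg c j i" and DPsym: "\<And>c i j. DP c i j = DP c j i"
    and F1: "\<And>i. (\<Sum>b\<in>UNIV. g i b * nn b) = 0"
    and F2: "\<And>c i. (\<Sum>b\<in>UNIV. g i b * Dn c b + Dg c i b * nn b) = 0"
    and F3: "\<And>c. (\<Sum>e\<in>UNIV. l e * Dn c e + Dl c e * nn e) = 0"
    and F4: "\<And>i j. (\<Sum>c\<in>UNIV. P i c * g c j) + l j * nn i = (if i = j then 1 else 0)"
    and F4d: "\<And>e i j. (\<Sum>c\<in>UNIV. P i c * Dg e c j + DP e i c * g c j) + (l j * Dn e i + Dl e j * nn i) = 0"
  shows "(\<Sum>b\<in>UNIV. nn b * (\<Sum>c\<in>UNIV. (\<Sum>d\<in>UNIV. P c d * th d) * Dg c a b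
            + g c b * (\<Sum>d\<in>UNIV. P c d * Dth a d + DP a c d * th d)
            + g a c * (\<Sum>d\<in>UNIV. P c d * Dth b d + DP b c d * th d)))
   = (\<Sum>c\<in>UNIV. nn c * Dth c a + th c * Dn a c)
     - (\<Sum>c\<in>UNIV. nn c * (\<Sum>e\<in>UNIV. th e * Dn c e + Dth c e * nn e)) * l a
     - 2 * ((\<Sum>c\<in>UNIV. th c * nn c) * (\<Sum>b\<in>UNIV. nn b * (1/2 * (Dl b a - Dl a b)))
        + (\<Sum>b\<in>UNIV. \<Sum>c\<in>UNIV. P b c * (1/2 * (\<Sum>e\<in>UNIV. nn e * Dg e a b + g e b * Dn a e + g a e * Dn b e)) * th c))"
proof -
  define tn where "tn = (\<Sum>d\<in>UNIV. th d * nn d)"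
  define L1 where "L1 = (\<Sum>c\<in>UNIV. \<Sum>b\<in>UNIV. \<Sum>d\<in>UNIV. (P c d * th d) * (g a b * Dn c b))"
  define L2 where "L2 = tn * (\<Sum>b\<in>UNIV. nn b * Dl b a)"
  define L3 where "L3 = l a * (\<Sum>b\<in>UNIV. nn b * (\<Sum>d\<in>UNIV. th d * Dn b d))"
  define L4 where "L4 = (\<Sum>b\<in>UNIV. nn b * (\<Sum>d\<in>UNIV. th d * (\<Sum>c\<in>UNIV. P d c * Dg b c a)))"
  define L5 where "L5 = (\<Sum>b\<in>UNIV. nn b * Dth b a)"
  define L6 where "L6 = l a * (\<Sum>b\<in>UNIV. nn b * (\<Sum>d\<in>UNIV. Dth b d * nn d))"
  define S where "S = (\<Sum>b\<in>UNIV. nn b * Dl a b)"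
  define R2 where "R2 = (\<Sum>c\<in>UNIV. th c * Dn a c)"
  have F2': "(\<Sum>b\<in>UNIV. Dg c i b * nn b) = - (\<Sum>b\<in>UNIV. g i b * Dn c b)" for c i
    using F2[where c=c and i=i] unfolding sum.distrib by linarith
  have e1: "(\<Sum>b\<in>UNIV. nn b * (\<Sum>c\<in>UNIV. (\<Sum>d\<in>UNIV. P c d * th d) * Dg c a b
            + g c b * (\<Sum>d\<in>UNIV. P c d * Dth a d + DP a c d * th d)
            + g a c * (\<Sum>d\<in>UNIV. P c d * Dth b d + DP b c d * th d)))
     = (\<Sum>c\<in>UNIV. (\<Sum>d\<in>UNIV. P c d * th d) * (\<Sum>b\<in>UNIV. Dg c a b * nn b))
       + (\<Sum>c\<in>UNIV. (\<Sum>d\<in>UNIV. P c d * Dth a d + DP a c d * th d) * (\<Sum>b\<in>UNIV. g c b * nn b))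
       + (\<Sum>b\<in>UNIV. nn b * (\<Sum>c\<in>UNIV. g a c * (\<Sum>d\<in>UNIV. P c d * Dth b d + DP b c d * th d)))"
    (is "_ = ?T1 + ?T2 + ?T3")
  proof -
    have "?T1 = (\<Sum>b\<in>UNIV. nn b * (\<Sum>c\<in>UNIV. (\<Sum>d\<in>UNIV. P c d * th d) * Dg c a b))"
      by (rule swap_help[symmetric])
    moreover have "?T2 = (\<Sum>b\<in>UNIV. nn b * (\<Sum>c\<in>UNIV. g c b * (\<Sum>d\<in>UNIV. P c d * Dth a d + DP a c d * th d)))"
      by (rule swap_help2[symmetric])
    ultimately show ?thesis by (simp only: split3)
  qed
  have t1: "(\<Sum>c\<in>UNIV. (\<Sum>d\<in>UNIV. P c d * th d) * (\<Sum>b\<in>UNIV. Dg c a b * nn b)) = - L1"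
    unfolding L1_def F2' by (rule tri)
  have t2: "(\<Sum>c\<in>UNIV. (\<Sum>d\<in>UNIV. P c d * Dth a d + DP a c d * th d) * (\<Sum>b\<in>UNIV. g c b * nn b)) = 0"
    by (simp add: F1)
  have t3a: "\<And>b. (\<Sum>c\<in>UNIV. g a c * (\<Sum>d\<in>UNIV. P c d * Dth b d + DP b c d * th d))
     = (\<Sum>d\<in>UNIV. Dth b d * (\<Sum>c\<in>UNIV. P d c * g c a) + th d * (\<Sum>c\<in>UNIV. DP b d c * g c a))"
  proof -
    fix b
    have "(\<Sum>c\<in>UNIV. g a c * (\<Sum>d\<in>UNIV. P c d * Dth b d + DP b c d * th d))
       = (\<Sum>c\<in>UNIV. \<Sum>d\<in>UNIV. Dth b d * (P d c * g c a) + th d * (DP b d c * g c a))"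
    proof (rule sum.cong[OF refl])
      fix c
      show "g a c * (\<Sum>d\<in>UNIV. P c d * Dth b d + DP b c d * th d) = (\<Sum>d\<in>UNIV. Dth b d * (P d c * g c a) + th d * (DP b d c * g c a))"
        unfolding sum_distrib_left gsym[of a c]
        by (rule sum.cong[OF refl]) (simp add: algebra_simps Psym[of c] DPsym[of b c])
    qed
    also have "\<dots> = (\<Sum>d\<in>UNIV. \<Sum>c\<in>UNIV. Dth b d * (P d c * g c a) + th d * (DP b d c * g c a))"
      by (rule sum.swap)
    also have "\<dots> = (\<Sum>d\<in>UNIV. Dth b d * (\<Sum>c\<in>UNIV. P d c * g c a) + th d * (\<Sum>c\<in>UNIV. DP b d c * g c a))"
      by (simp add: sum.distrib sum_distrib_left)
    finally show "?thesis b" .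
  qed
  have F4a: "(\<Sum>c\<in>UNIV. P d c * g c a) = (if d = a then 1 else 0) - l a * nn d" for d
    using F4[where i=d and j=a] by linarith
  have F4b: "(\<Sum>c\<in>UNIV. DP b d c * g c a) = - (\<Sum>c\<in>UNIV. P d c * Dg b c a) - l a * Dn b d - Dl b a * nn d" for b d
    using F4d[where e=b and i=d and j=a] by (simp only: sum.distrib)
  have t3: "(\<Sum>b\<in>UNIV. nn b * (\<Sum>c\<in>UNIV. g a c * (\<Sum>d\<in>UNIV. P c d * Dth b d + DP b c d * th d)))
     = L5 - L6 - L4 - L3 - L2"
    unfolding t3a F4a F4b lin_inner tn_def[symmetric] lin5 L5_def L6_def L4_def L3_def L2_def ..
  have r1: "(\<Sum>c\<in>UNIV. nn c * Dth c a + th c * Dn a c) = L5 + R2"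
    unfolding L5_def R2_def by (rule sum.distrib)
  have r2: "(\<Sum>c\<in>UNIV. nn c * (\<Sum>e\<in>UNIV. th e * Dn c e + Dth c e * nn e)) * l a = L3 + L6"
    unfolding L3_def L6_def by (rule r2gen)
  have r3: "2 * (tn * (\<Sum>b\<in>UNIV. nn b * (1/2 * (Dl b a - Dl a b)))) = L2 - tn * S"
    unfolding L2_def S_def by (rule r3gen) simp
  have r4: "2 * (\<Sum>b\<in>UNIV. \<Sum>c\<in>UNIV. P b c * (1/2 * (\<Sum>e\<in>UNIV. nn e * Dg e a b + g e b * Dn a e + g a e * Dn b e)) * th c)
     = (\<Sum>b\<in>UNIV. \<Sum>c\<in>UNIV. P b c * th c * (\<Sum>e\<in>UNIV. nn e * Dg e a b))
     + (\<Sum>b\<in>UNIV. \<Sum>c\<in>UNIV. P b c * th c * (\<Sum>e\<in>UNIV. g e b * Dn a e))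
     + (\<Sum>b\<in>UNIV. \<Sum>c\<in>UNIV. P b c * th c * (\<Sum>e\<in>UNIV. g a e * Dn b e))"
    by (rule r4gen) simp
  have r7: "(\<Sum>b\<in>UNIV. \<Sum>c\<in>UNIV. P b c * th c * (\<Sum>e\<in>UNIV. nn e * Dg e a b)) = L4"
  proof -
    have "(\<Sum>b\<in>UNIV. \<Sum>c\<in>UNIV. P b c * th c * (\<Sum>e\<in>UNIV. nn e * Dg e a b))
       = (\<Sum>b\<in>UNIV. \<Sum>c\<in>UNIV. \<Sum>e\<in>UNIV. P b c * th c * (nn e * Dg e a b))"
      by (simp only: sum_distrib_left)
    also have "\<dots> = (\<Sum>c\<in>UNIV. \<Sum>b\<in>UNIV. \<Sum>e\<in>UNIV. P b c * th c * (nn e * Dg e a b))"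
      by (rule sum.swap)
    also have "\<dots> = (\<Sum>c\<in>UNIV. \<Sum>e\<in>UNIV. \<Sum>b\<in>UNIV. P b c * th c * (nn e * Dg e a b))"
      by (intro sum.cong refl sum.swap)
    also have "\<dots> = (\<Sum>e\<in>UNIV. \<Sum>c\<in>UNIV. \<Sum>b\<in>UNIV. P b c * th c * (nn e * Dg e a b))"
      by (rule sum.swap)
    also have "\<dots> = (\<Sum>e\<in>UNIV. \<Sum>c\<in>UNIV. \<Sum>b\<in>UNIV. nn e * (th c * (P c b * Dg e b a)))"
      by (intro sum.cong refl) (simp add: Psym Dgsym mult_ac)
    also have "\<dots> = L4" unfolding L4_def by (simp only: sum_distrib_left)
    finally show ?thesis .
  qed
  have r9: "(\<Sum>b\<in>UNIV. \<Sum>c\<in>UNIV. P b c * th c * (\<Sum>e\<in>UNIV. g a e * Dn b e)) = L1"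
  proof -
    have "(\<Sum>b\<in>UNIV. \<Sum>c\<in>UNIV. P b c * th c * (\<Sum>e\<in>UNIV. g a e * Dn b e))
       = (\<Sum>b\<in>UNIV. \<Sum>c\<in>UNIV. \<Sum>e\<in>UNIV. (P b c * th c) * (g a e * Dn b e))"
      by (simp only: sum_distrib_left)
    also have "\<dots> = L1" unfolding L1_def
      by (intro sum.cong refl sum.swap)
    finally show ?thesis .
  qed
  have r8a: "(\<Sum>b\<in>UNIV. \<Sum>c\<in>UNIV. P b c * th c * (\<Sum>e\<in>UNIV. g e b * Dn a e))
     = (\<Sum>c\<in>UNIV. th c * (\<Sum>e\<in>UNIV. Dn a e * (\<Sum>b\<in>UNIV. P c b * g b e)))"
  proof -
    have "(\<Sum>b\<in>UNIV. \<Sum>c\<in>UNIV. P b c * th c * (\<Sum>e\<in>UNIV. g e b * Dn a e))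
       = (\<Sum>b\<in>UNIV. \<Sum>c\<in>UNIV. \<Sum>e\<in>UNIV. P b c * th c * (g e b * Dn a e))"
      by (simp only: sum_distrib_left)
    also have "\<dots> = (\<Sum>c\<in>UNIV. \<Sum>b\<in>UNIV. \<Sum>e\<in>UNIV. P b c * th c * (g e b * Dn a e))"
      by (rule sum.swap)
    also have "\<dots> = (\<Sum>c\<in>UNIV. \<Sum>e\<in>UNIV. \<Sum>b\<in>UNIV. P b c * th c * (g e b * Dn a e))"
      by (intro sum.cong refl sum.swap)
    also have "\<dots> = (\<Sum>c\<in>UNIV. \<Sum>e\<in>UNIV. \<Sum>b\<in>UNIV. th c * (Dn a e * (P c b * g b e)))"
      by (intro sum.cong refl) (simp add: Psym gsym mult_ac)
    also have "\<dots> = (\<Sum>c\<in>UNIV. th c * (\<Sum>e\<in>UNIV. Dn a e * (\<Sum>b\<in>UNIV. P c b * g b e)))"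
      by (simp only: sum_distrib_left)
    finally show ?thesis .
  qed
  have F4c: "(\<Sum>b\<in>UNIV. P c b * g b e) = (if c = e then 1 else 0) - l e * nn c" for c e
    using F4[where i=c and j=e] by linarith
  have F3a: "(\<Sum>e\<in>UNIV. Dn a e * l e) = - S"
    using F3[where c=a] unfolding S_def sum.distrib by (simp add: mult.commute add_eq_0_iff)
  have r8: "(\<Sum>b\<in>UNIV. \<Sum>c\<in>UNIV. P b c * th c * (\<Sum>e\<in>UNIV. g e b * Dn a e)) = R2 + tn * S"
    unfolding r8a F4c delta_gen F3a R2_def tn_def by simp
  have tn': "(\<Sum>c\<in>UNIV. th c * nn c) = tn" by (simp add: tn_def)
  show ?thesis
    unfolding e1 t1 t2 t3 r1 r2 tn' distrib_left r3 r4 r7 r8 r9 by simp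
qed

lemma alg2:
  fixes g :: "'n::finite \<Rightarrow> 'n \<Rightarrow> real" and Dg :: "'n \<Rightarrow> 'n \<Rightarrow> 'n \<Rightarrow> real"
    and nn Df :: "'n \<Rightarrow> real" and Dn :: "'n \<Rightarrow> 'n \<Rightarrow> real" and fv :: real and a :: 'n
  assumes F1: "\<And>i. (\<Sum>b\<in>UNIV. g i b * nn b) = 0"
    and F2: "\<And>c i. (\<Sum>b\<in>UNIV. g i b * Dn c b + Dg c i b * nn b) = 0"
  shows "(\<Sum>b\<in>UNIV. nn b * (\<Sum>c\<in>UNIV. (fv * nn c) * Dg c a b
            + g c b * (fv * Dn a c + Df a * nn c)
            + g a c * (fv * Dn b c + Df b * nn c))) = 0"
proof -
  have F2': "(\<Sum>b\<in>UNIV. Dg c i b * nn b) = - (\<Sum>b\<in>UNIV. g i b * Dn c b)" for c i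
    using F2[where c=c and i=i] unfolding sum.distrib by linarith
  have T1: "(\<Sum>b\<in>UNIV. nn b * (\<Sum>c\<in>UNIV. (fv * nn c) * Dg c a b))
     = - (fv * (\<Sum>c\<in>UNIV. nn c * (\<Sum>b\<in>UNIV. g a b * Dn c b)))"
  proof -
    have "(\<Sum>b\<in>UNIV. nn b * (\<Sum>c\<in>UNIV. (fv * nn c) * Dg c a b))
       = (\<Sum>c\<in>UNIV. (fv * nn c) * (\<Sum>b\<in>UNIV. Dg c a b * nn b))"
      by (rule swap_help)
    also have "\<dots> = (\<Sum>c\<in>UNIV. - (fv * (nn c * (\<Sum>b\<in>UNIV. g a b * Dn c b))))"
      unfolding F2' by (intro sum.cong refl) simp
    also have "\<dots> = - (fv * (\<Sum>c\<in>UNIV. nn c * (\<Sum>b\<in>UNIV. g a b * Dn c b)))"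
      by (simp only: sum_negf sum_distrib_left[symmetric])
    finally show ?thesis .
  qed
  have T2: "(\<Sum>b\<in>UNIV. nn b * (\<Sum>c\<in>UNIV. g c b * (fv * Dn a c + Df a * nn c))) = 0"
  proof -
    have "(\<Sum>b\<in>UNIV. nn b * (\<Sum>c\<in>UNIV. g c b * (fv * Dn a c + Df a * nn c)))
       = (\<Sum>c\<in>UNIV. (fv * Dn a c + Df a * nn c) * (\<Sum>b\<in>UNIV. g c b * nn b))"
      by (rule swap_help2)
    then show ?thesis by (simp add: F1)
  qed
  have inner: "(\<Sum>c\<in>UNIV. g a c * (fv * Dn b c + Df b * nn c)) = fv * (\<Sum>c\<in>UNIV. g a c * Dn b c)" for b
  proof -
    have "(\<Sum>c\<in>UNIV. g a c * (fv * Dn b c + Df b * nn c)) = (\<Sum>c\<in>UNIV. fv * (g a c * Dn b c) + Df b * (g a c * nn c))"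
      by (intro sum.cong refl) (simp add: algebra_simps)
    also have "\<dots> = fv * (\<Sum>c\<in>UNIV. g a c * Dn b c) + Df b * (\<Sum>c\<in>UNIV. g a c * nn c)"
      by (simp only: sum.distrib sum_distrib_left[symmetric])
    finally show ?thesis by (simp add: F1)
  qed
  have T3: "(\<Sum>b\<in>UNIV. nn b * (\<Sum>c\<in>UNIV. g a c * (fv * Dn b c + Df b * nn c)))
     = fv * (\<Sum>b\<in>UNIV. nn b * (\<Sum>c\<in>UNIV. g a c * Dn b c))"
    unfolding inner by (simp add: sum_distrib_left mult_ac)
  show ?thesis unfolding split3 T1 T2 T3 by simp
qed

theorem lemmaC3:
  fixes H :: "(real^'n::finite) set"
    and \<gamma> P :: "real^'n \<Rightarrow> 'n \<Rightarrow> 'n \<Rightarrow> real"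
    and ell n \<theta> :: "real^'n \<Rightarrow> 'n \<Rightarrow> real"
    and ell2 n2 f :: "real^'n \<Rightarrow> real"
  assumes data: "metric_hypersurface_data H \<gamma> ell ell2"
    and inv: "hypersurface_inverse H \<gamma> ell ell2 P n n2"
    and smoothP: "smooth_field2 H P" and smoothn: "smooth_field1 H n" and smoothn2: "smooth_fun H n2"
    and null: "\<forall>x\<in>H. n2 x = 0"
    and smooth\<theta>: "smooth_field1 H \<theta>" and smoothf: "smooth_fun H f"
  shows "(\<forall>x\<in>H. \<forall>a.
           (\<Sum>b\<in>UNIV. n x b * lie_tensor (\<lambda>y b. \<Sum>c\<in>UNIV. P y b c * \<theta> y c) \<gamma> x a b)
         = lie_form n \<theta> x a
           - lie_fun n (\<lambda>y. \<Sum>c\<in>UNIV. \<theta> y c * n y c) x * ell x a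
           - 2 * ((\<Sum>c\<in>UNIV. \<theta> x c * n x c) * s_form n ell x a
                  + (\<Sum>b\<in>UNIV. \<Sum>c\<in>UNIV. P x b c * U_tensor n \<gamma> x a b * \<theta> x c)))
     \<and> (\<forall>x\<in>H. \<forall>a. (\<Sum>b\<in>UNIV. n x b * lie_tensor (\<lambda>y c. f y * n y c) \<gamma> x a b) = 0)"
proof -
  have openH: "open H" and gsymH: "\<forall>x\<in>H. \<forall>a b. \<gamma> x a b = \<gamma> x b a"
    and sg: "smooth_field2 H \<gamma>" and sl: "smooth_field1 H ell"
    using data unfolding metric_hypersurface_data_def by auto
  have invH: "\<And>x. x \<in> H \<Longrightarrow>
       (\<forall>a b. P x a b = P x b a) \<and>
       (\<forall>a. (\<Sum>b\<in>UNIV. \<gamma> x a b * n x b) = 0) \<and>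
       (\<Sum>a\<in>UNIV. ell x a * n x a) = 1 \<and>
       (\<forall>a b. (\<Sum>c\<in>UNIV. P x a c * \<gamma> x c b) + ell x b * n x a = (if a = b then 1 else 0))"
    using inv null unfolding hypersurface_inverse_def by auto
  have mainpt: "(\<Sum>b\<in>UNIV. n x b * lie_tensor (\<lambda>y b. \<Sum>c\<in>UNIV. P y b c * \<theta> y c) \<gamma> x a b)
         = lie_form n \<theta> x a
           - lie_fun n (\<lambda>y. \<Sum>c\<in>UNIV. \<theta> y c * n y c) x * ell x a
           - 2 * ((\<Sum>c\<in>UNIV. \<theta> x c * n x c) * s_form n ell x a
                  + (\<Sum>b\<in>UNIV. \<Sum>c\<in>UNIV. P x b c * U_tensor n \<gamma> x a b * \<theta> x c))
     \<and> (\<Sum>b\<in>UNIV. n x b * lie_tensor (\<lambda>y c. f y * n y c) \<gamma> x a b) = 0"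
    if x: "x \<in> H" for x a
  proof -
    have dg[simp]: "(\<lambda>y. \<gamma> y i j) differentiable (at x)" for i j
      using sg x smooth_diff unfolding smooth_field2_def by blast
    have dP[simp]: "(\<lambda>y. P y i j) differentiable (at x)" for i j
      using smoothP x smooth_diff unfolding smooth_field2_def by blast
    have dn[simp]: "(\<lambda>y. n y i) differentiable (at x)" for i
      using smoothn x smooth_diff unfolding smooth_field1_def by blast
    have dl[simp]: "(\<lambda>y. ell y i) differentiable (at x)" for i
      using sl x smooth_diff unfolding smooth_field1_def by blast
    have dth[simp]: "(\<lambda>y. \<theta> y i) differentiable (at x)" for i
      using smooth\<theta> x smooth_diff unfolding smooth_field1_def by blast
    have df[simp]: "f differentiable (at x)"
      using smoothf x smooth_diff by blast
    have gsym: "\<gamma> x i j = \<gamma> x j i" for i j using gsymH x by blast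
    have Psym: "P x i j = P x j i" for i j using invH[OF x] by blast
    have Dgsym: "pd c (\<lambda>y. \<gamma> y i j) x = pd c (\<lambda>y. \<gamma> y j i) x" for c i j
      by (rule pd_cong_open[OF openH x]) (use gsymH in auto)
    have DPsym: "pd c (\<lambda>y. P y i j) x = pd c (\<lambda>y. P y j i) x" for c i j
      by (rule pd_cong_open[OF openH x]) (use invH in auto)
    have F1: "(\<Sum>b\<in>UNIV. \<gamma> x i b * n x b) = 0" for i using invH[OF x] by blast
    have F2: "(\<Sum>b\<in>UNIV. \<gamma> x i b * pd c (\<lambda>y. n y b) x + pd c (\<lambda>y. \<gamma> y i b) x * n x b) = 0" for c i
    proof -
      have "pd c (\<lambda>y. \<Sum>b\<in>UNIV. \<gamma> y i b * n y b) x = 0"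
        by (rule pd_const_open[OF openH x]) (use invH in blast)
      then show ?thesis by (simp add: pd_sum pd_mult)
    qed
    have F3: "(\<Sum>e\<in>UNIV. ell x e * pd c (\<lambda>y. n y e) x + pd c (\<lambda>y. ell y e) x * n x e) = 0" for c
    proof -
      have "pd c (\<lambda>y. \<Sum>e\<in>UNIV. ell y e * n y e) x = 0"
        by (rule pd_const_open[OF openH x]) (use invH in blast)
      then show ?thesis by (simp add: pd_sum pd_mult)
    qed
    have F4: "(\<Sum>c\<in>UNIV. P x i c * \<gamma> x c j) + ell x j * n x i = (if i = j then 1 else 0)" for i j
      using invH[OF x] by blast
    have F4d: "(\<Sum>c\<in>UNIV. P x i c * pd e (\<lambda>y. \<gamma> y c j) x + pd e (\<lambda>y. P y i c) x * \<gamma> x c j)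
        + (ell x j * pd e (\<lambda>y. n y i) x + pd e (\<lambda>y. ell y j) x * n x i) = 0" for e i j
    proof -
      have "pd e (\<lambda>y. (\<Sum>c\<in>UNIV. P y i c * \<gamma> y c j) + ell y j * n y i) x = 0"
        by (rule pd_const_open[OF openH x]) (use invH in blast)
      then show ?thesis by (simp add: pd_sum pd_mult pd_add)
    qed
    have dX: "pd e (\<lambda>y. \<Sum>d\<in>UNIV. P y c d * \<theta> y d) x
        = (\<Sum>d\<in>UNIV. P x c d * pd e (\<lambda>y. \<theta> y d) x + pd e (\<lambda>y. P y c d) x * \<theta> x d)" for e c
      by (simp add: pd_sum pd_mult)
    have dtn: "pd c (\<lambda>y. \<Sum>e\<in>UNIV. \<theta> y e * n y e) x
        = (\<Sum>e\<in>UNIV. \<theta> x e * pd c (\<lambda>y. n y e) x + pd c (\<lambda>y. \<theta> y e) x * n x e)" for c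
      by (simp add: pd_sum pd_mult)
    have dfn: "pd e (\<lambda>y. f y * n y c) x = f x * pd e (\<lambda>y. n y c) x + pd e f x * n x c" for e c
      by (simp add: pd_mult)
    note A1 = alg1[where g="\<lambda>i j. \<gamma> x i j" and P="\<lambda>i j. P x i j"
        and Dg="\<lambda>c i j. pd c (\<lambda>y. \<gamma> y i j) x" and DP="\<lambda>c i j. pd c (\<lambda>y. P y i j) x"
        and l="\<lambda>i. ell x i" and nn="\<lambda>i. n x i" and th="\<lambda>i. \<theta> x i"
        and Dl="\<lambda>c i. pd c (\<lambda>y. ell y i) x" and Dn="\<lambda>c i. pd c (\<lambda>y. n y i) x"
        and Dth="\<lambda>c i. pd c (\<lambda>y. \<theta> y i) x" and a=a, OF gsym Psym Dgsym DPsym F1 F2 F3 F4 F4d]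
    note A2 = alg2[where g="\<lambda>i j. \<gamma> x i j" and Dg="\<lambda>c i j. pd c (\<lambda>y. \<gamma> y i j) x"
        and nn="\<lambda>i. n x i" and Dn="\<lambda>c i. pd c (\<lambda>y. n y i) x" and fv="f x"
        and Df="\<lambda>i. pd i f x" and a=a, OF F1 F2]
    show ?thesis
    proof
      show "(\<Sum>b\<in>UNIV. n x b * lie_tensor (\<lambda>y b. \<Sum>c\<in>UNIV. P y b c * \<theta> y c) \<gamma> x a b)
         = lie_form n \<theta> x a
           - lie_fun n (\<lambda>y. \<Sum>c\<in>UNIV. \<theta> y c * n y c) x * ell x a
           - 2 * ((\<Sum>c\<in>UNIV. \<theta> x c * n x c) * s_form n ell x a
                  + (\<Sum>b\<in>UNIV. \<Sum>c\<in>UNIV. P x b c * U_tensor n \<gamma> x a b * \<theta> x c))"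
        unfolding lie_tensor_def lie_form_def lie_fun_def s_form_def F_tensor_def U_tensor_def dX dtn
        by (rule A1)
      show "(\<Sum>b\<in>UNIV. n x b * lie_tensor (\<lambda>y c. f y * n y c) \<gamma> x a b) = 0"
        unfolding lie_tensor_def dfn by (rule A2)
    qed
  qed
  show ?thesis using mainpt by blast
qed

end
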